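(* Let $\overline{F}$ be a finite set, $r=(r(i,j):i,j\in\overline{F})$ an irreducible stochastic matrix, and $\boldsymbol{\alpha}=(\alpha_j:j\in\overline{F})\in[0,1]^{\overline{F}}$ a non-zero vector, and let $r^{(\boldsymbol{\alpha})}=(I-rI_{(1-\boldsymbol{\alpha})})^{-1}rI_{\boldsymbol{\alpha}}$. If a row vector $y$ satisfies $y\cdot r^{(\boldsymbol{\alpha})}=y$, then $x=y\,(I-rI_{(1-\boldsymbol{\alpha})})^{-1}$ satisfies $x\cdot r=x$, and $y=(\alpha_j x_j:j\in\overline{F})$.
   Context: $I_{\boldsymbol{\alpha}}$ and $I_{(1-\boldsymbol{\alpha})}$ are the diagonal matrices indexed by $\overline{F}$ with diagonal entries $\alpha_j$, resp. $1-\alpha_j$; $I$ is the identity matrix. Under the given assumptions $I-rI_{(1-\boldsymbol{\alpha})}$ is invertible, and $r^{(\boldsymbol{\alpha})}$ is the transition matrix of the Markov chain obtained from the chain with transition matrix $r$ by randomized skipping with acceptance probabilities $\boldsymbol{\alpha}$ (a proposed next state $j$, chosen with probability $r(i,j)$ from the current state $i$, is accepted with probability $\alpha_j$; if rejected, a new proposal is drawn from row $j$ of $r$ without time passing, and so on until acceptance). *)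

theory Defs
  imports "HOL-Analysis.Analysis"
begin

definition stochastic_matrix :: "real^'n^'n \<Rightarrow> bool" where
  "stochastic_matrix r \<longleftrightarrow>
     (\<forall>i j. r $ i $ j \<ge> 0) \<and> (\<forall>i. (\<Sum>j\<in>UNIV. r $ i $ j) = 1)"

text \<open>Irreducible: every state j is reachable from every state i,
  i.e. for all i, j there is n with (r^n)(i,j) > 0 (paths of positive entries).\<close>
definition irreducible_matrix :: "real^'n^'n \<Rightarrow> bool" where
  "irreducible_matrix r \<longleftrightarrow> (\<forall>i j. (i, j) \<in> {(a, b). r $ a $ b > 0}\<^sup>*)"

definition diag_mat :: "real^'n \<Rightarrow> real^'n^'n" where
  "diag_mat v = (\<chi> i j. if i = j then v $ i else 0)"

end

theory Submission
  imports Defs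
begin

lemma mul_diag_entry: "(r ** diag_mat w) $ i $ j = r $ i $ j * w $ j"
proof -
  have "(r ** diag_mat w) $ i $ j = (\<Sum>k\<in>UNIV. r $ i $ k * (if k = j then w $ k else 0))"
    by (simp add: matrix_matrix_mult_def diag_mat_def)
  also have "\<dots> = (\<Sum>k\<in>UNIV. if k = j then r $ i $ k * w $ k else 0)"
    by (rule sum.cong) auto
  also have "\<dots> = r $ i $ j * w $ j" by simp
  finally show ?thesis .
qed

lemma kernel_trivial:
  fixes r :: "real^'n^'n" and \<alpha> v :: "real^'n"
  assumes st: "stochastic_matrix r" and irr: "irreducible_matrix r"
    and al: "\<forall>j. 0 \<le> \<alpha> $ j \<and> \<alpha> $ j \<le> 1" and nz: "\<alpha> \<noteq> 0"
    and ker: "(mat 1 - r ** diag_mat (1 - \<alpha>)) *v v = 0"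
  shows "v = 0"
proof -
  have rnn: "\<And>i j. r $ i $ j \<ge> 0" and rs: "\<And>i. (\<Sum>j\<in>UNIV. r $ i $ j) = 1"
    using st unfolding stochastic_matrix_def by auto
  have fx: "v $ i = (\<Sum>j\<in>UNIV. r $ i $ j * (1 - \<alpha> $ j) * v $ j)" for i
  proof -
    have "((mat 1 - r ** diag_mat (1 - \<alpha>)) *v v) $ i = 0" using ker by simp
    hence "v $ i - (r ** diag_mat (1 - \<alpha>) *v v) $ i = 0"
      by (simp add: matrix_vector_mult_diff_rdistrib)
    thus ?thesis by (simp add: matrix_vector_mult_def mul_diag_entry)
  qed
  define m where "m = Max (range (\<lambda>j. \<bar>v $ j\<bar>))"
  have mge: "\<bar>v $ j\<bar> \<le> m" for j unfolding m_def by (rule Max_ge) auto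
  obtain i0 where i0: "\<bar>v $ i0\<bar> = m"
  proof -
    have "m \<in> range (\<lambda>j. \<bar>v $ j\<bar>)" unfolding m_def by (rule Max_in) auto
    thus ?thesis using that by auto
  qed
  have m0: "m \<ge> 0" using i0 by auto
  have stp: "\<bar>v $ j\<bar> = m \<and> \<alpha> $ j * m = 0" if "\<bar>v $ i\<bar> = m" "r $ i $ j > 0" for i j
  proof -
    define f where "f k = r $ i $ k * (m - (1 - \<alpha> $ k) * \<bar>v $ k\<bar>)" for k
    have fnn: "f k \<ge> 0" for k
    proof -
      have "(1 - \<alpha> $ k) * \<bar>v $ k\<bar> \<le> 1 * m"
        using al mge[of k] by (intro mult_mono) auto
      thus ?thesis unfolding f_def using rnn[of i k] by auto
    qed
    have "\<bar>v $ i\<bar> \<le> (\<Sum>k\<in>UNIV. \<bar>r $ i $ k * (1 - \<alpha> $ k) * v $ k\<bar>)"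
      by (subst fx) (rule sum_abs)
    also have "\<dots> = (\<Sum>k\<in>UNIV. r $ i $ k * ((1 - \<alpha> $ k) * \<bar>v $ k\<bar>))"
      using rnn al by (intro sum.cong) (auto simp: abs_mult)
    finally have A: "m \<le> (\<Sum>k\<in>UNIV. r $ i $ k * ((1 - \<alpha> $ k) * \<bar>v $ k\<bar>))" using that by simp
    have "sum f UNIV = m * (\<Sum>k\<in>UNIV. r $ i $ k) - (\<Sum>k\<in>UNIV. r $ i $ k * ((1 - \<alpha> $ k) * \<bar>v $ k\<bar>))"
      unfolding f_def by (simp add: sum_subtractf sum_distrib_left sum.distrib algebra_simps)
    hence "sum f UNIV \<le> 0" using A rs[of i] by simp
    hence "sum f UNIV = 0" using fnn by (meson order_antisym sum_nonneg)
    hence "f j = 0" using fnn sum_nonneg_eq_0_iff[of UNIV f] by auto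
    hence e: "(1 - \<alpha> $ j) * \<bar>v $ j\<bar> = m" using that(2) unfolding f_def by simp
    have "(1 - \<alpha> $ j) * \<bar>v $ j\<bar> \<le> \<bar>v $ j\<bar>" using al
      by (simp add: algebra_simps mult_nonneg_nonneg)
    hence "\<bar>v $ j\<bar> = m" using e mge[of j] by linarith
    thus ?thesis using e by (simp add: algebra_simps)
  qed
  have all: "\<bar>v $ j\<bar> = m" for j
  proof -
    have "(i0, j) \<in> {(a, b). r $ a $ b > 0}\<^sup>*" using irr unfolding irreducible_matrix_def by auto
    thus ?thesis
    proof (induction rule: rtrancl_induct)
      case base show ?case using i0 .
    next
      case (step y z) thus ?case using stp by auto
    qed
  qed
  obtain k where k: "\<alpha> $ k \<noteq> 0" using nz by (metis vec_eq_iff zero_index)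
  have "\<exists>j. r $ k $ j > 0"
  proof (rule ccontr)
    assume "\<not> ?thesis"
    hence "\<forall>j. r $ k $ j = 0" using rnn by (metis less_eq_real_def)
    thus False using rs[of k] by simp
  qed
  then obtain j where j: "r $ k $ j > 0" by blast
  have "\<exists>z. r $ z $ k > 0"
  proof -
    have "(j, k) \<in> {(a, b). r $ a $ b > 0}\<^sup>*" using irr unfolding irreducible_matrix_def by auto
    thus ?thesis
    proof (cases rule: rtranclE)
      case base thus ?thesis using j by auto
    next
      case (step z) thus ?thesis by auto
    qed
  qed
  then obtain z where "r $ z $ k > 0" by blast
  hence "\<alpha> $ k * m = 0" using stp all by blast
  hence "m = 0" using k by simp
  thus "v = 0" using all by (simp add: vec_eq_iff)
qed

lemma vm_diff: "(x::real^'n) v* (A - B) = x v* A - x v* B"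
  by (simp add: vector_matrix_mult_def vec_eq_iff sum_subtractf algebra_simps)
lemma vm_add: "(x::real^'n) v* (A + B) = x v* A + x v* B"
  by (simp add: vector_matrix_mult_def vec_eq_iff sum.distrib algebra_simps)
lemma vm_diag: "(x::real^'n) v* diag_mat a = (\<chi> j. a $ j * x $ j)"
proof -
  have "(x v* diag_mat a) $ j = a $ j * x $ j" for j
  proof -
    have "(x v* diag_mat a) $ j = (\<Sum>k\<in>UNIV. if k = j then x $ k * a $ k else 0)"
      by (simp add: vector_matrix_mult_def diag_mat_def if_distrib cong: if_cong)
    thus ?thesis by simp
  qed
  thus ?thesis by (simp add: vec_eq_iff)
qed

theorem proposition2p5:
  fixes r :: "real^'n^'n" and \<alpha> y :: "real^'n"
  assumes "stochastic_matrix r" and "irreducible_matrix r"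
    and "\<forall>j. 0 \<le> \<alpha> $ j \<and> \<alpha> $ j \<le> 1" and "\<alpha> \<noteq> 0"
    and "y v* (matrix_inv (mat 1 - r ** diag_mat (1 - \<alpha>)) ** r ** diag_mat \<alpha>) = y"
  shows "(let x = y v* matrix_inv (mat 1 - r ** diag_mat (1 - \<alpha>))
          in x v* r = x \<and> y = (\<chi> j. \<alpha> $ j * x $ j))"
proof -
  define A where "A = mat 1 - r ** diag_mat (1 - \<alpha>)"
  define B where "B = matrix_inv A"
  have "\<exists>C. C ** A = mat 1"
    unfolding matrix_left_invertible_ker A_def using kernel_trivial[OF assms(1-4)] by blast
  hence "invertible A" using invertible_left_inverse by blast
  hence "A ** B = mat 1 \<and> B ** A = mat 1"
    unfolding B_def matrix_inv_def invertible_def by (rule someI_ex)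
  hence BA: "B ** A = mat 1" by simp
  define x where "x = y v* B"
  have yx: "y = x v* A" unfolding x_def vector_matrix_mul_assoc BA by simp
  have y2: "y = x v* r v* diag_mat \<alpha>"
    using assms(5) unfolding A_def[symmetric] B_def[symmetric] x_def
    by (metis matrix_mul_assoc vector_matrix_mul_assoc)
  have D: "diag_mat \<alpha> + diag_mat (1 - \<alpha>) = (mat 1 :: real^'n^'n)"
    by (simp add: diag_mat_def mat_def vec_eq_iff)
  have "x v* r v* diag_mat \<alpha> = x - x v* r v* diag_mat (1 - \<alpha>)"
    using yx y2 unfolding A_def by (simp add: vm_diff vector_matrix_mul_assoc)
  hence "x v* r v* (diag_mat \<alpha> + diag_mat (1 - \<alpha>)) = x"
    by (simp add: vm_add)
  hence xr: "x v* r = x" unfolding D by simp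
  have "y = (\<chi> j. \<alpha> $ j * x $ j)"
    using y2 unfolding xr by (simp add: vm_diag)
  thus ?thesis using xr unfolding x_def B_def A_def Let_def by simp
qed

end
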